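(* Let $k \geq 2$ and let $a_1,\ldots,a_k$ be integers, all nonzero and all of the same sign. Let $\mathit{min}_1,\ldots,\mathit{min}_k \in \mathbb{Z}$. Fix an integer $i$ with $1 \leq i < k$, and let $\mathit{max}_i \in \mathbb{Z}$ with $n_i := \mathit{max}_i - \mathit{min}_i > 0$. Let $X \subseteq \mathbb{Z}^k$ be a set such that every $(x_1,\ldots,x_k) \in X$ satisfies $\mathit{min}_j \leq x_j$ for all $1 \leq j \leq k$ and $x_i < \mathit{max}_i$. Suppose that for all $(x_1,\ldots,x_k) \in X$, $$\forall i' \in \mathbb{Z},\ 1 \leq i' < i \Rightarrow \sum_{j=1}^{i'} |a_j|\,(x_j - \mathit{min}_j) < |a_{i'+1}|,$$ and suppose that either $n_i \cdot a_i = a_{i+1}$ or $|a_i| \cdot n_i \leq |a_{i+1}|$. Then for all $(x_1,\ldots,x_k) \in X$, $$\sum_{j=1}^{i} |a_j|\,(x_j - \mathit{min}_j) < |a_{i+1}|.$$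
   Context: All quantities are integers; $|\cdot|$ denotes absolute value. *)

theory Defs
  imports Main
begin

end

theory Submission
  imports Defs
begin

theorem lemma1:
  fixes k i :: nat
    and a mn :: "nat \<Rightarrow> int"
    and mx_i :: int
    and X :: "(nat \<Rightarrow> int) set"
  assumes "k \<ge> 2"
    and "\<forall>j\<in>{1..k}. a j \<noteq> 0"
    and "(\<forall>j\<in>{1..k}. a j > 0) \<or> (\<forall>j\<in>{1..k}. a j < 0)"
    and "1 \<le> i" and "i < k"
    and "mx_i - mn i > 0"
    and "\<forall>x\<in>X. (\<forall>j\<in>{1..k}. mn j \<le> x j) \<and> x i < mx_i"
    and "\<forall>x\<in>X. \<forall>i'::nat. 1 \<le> i' \<and> i' < i \<longrightarrow>
           (\<Sum>j=1..i'. \<bar>a j\<bar> * (x j - mn j)) < \<bar>a (i'+1)\<bar>"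
    and "(mx_i - mn i) * a i = a (i+1) \<or> \<bar>a i\<bar> * (mx_i - mn i) \<le> \<bar>a (i+1)\<bar>"
  shows "\<forall>x\<in>X. (\<Sum>j=1..i. \<bar>a j\<bar> * (x j - mn j)) < \<bar>a (i+1)\<bar>"
proof
  fix x assume xX: "x \<in> X"
  let ?n = "mx_i - mn i"
  have ai: "a i \<noteq> 0" using assms(2,4,5) by auto
  have bound: "\<bar>a i\<bar> * ?n \<le> \<bar>a (i+1)\<bar>"
  proof (cases "?n * a i = a (i+1)")
    case True
    then have "\<bar>a (i+1)\<bar> = \<bar>?n\<bar> * \<bar>a i\<bar>" by (metis abs_mult)
    then have "\<bar>a (i+1)\<bar> = ?n * \<bar>a i\<bar>" using assms(6) by simp
    then show ?thesis by (simp add: mult.commute)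
  next
    case False then show ?thesis using assms(9) by auto
  qed
  have xi: "x i - mn i \<le> ?n - 1" using assms(7) xX by auto
  have xi0: "0 \<le> x i - mn i" using assms(4,5,7) xX by auto
  have t: "\<bar>a i\<bar> * (x i - mn i) \<le> \<bar>a i\<bar> * (?n - 1)"
    using xi by (simp add: mult_left_mono)
  show "(\<Sum>j=1..i. \<bar>a j\<bar> * (x j - mn j)) < \<bar>a (i+1)\<bar>"
  proof (cases "i = 1")
    case True
    then show ?thesis using t bound ai by (simp add: algebra_simps)
  next
    case False
    then obtain m where m: "i = Suc m" "1 \<le> m" using assms(4) by (cases i) auto
    have s: "(\<Sum>j=1..i. \<bar>a j\<bar> * (x j - mn j)) = (\<Sum>j=1..m. \<bar>a j\<bar> * (x j - mn j)) + \<bar>a i\<bar> * (x i - mn i)"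
      using m by simp
    have "(\<Sum>j=1..m. \<bar>a j\<bar> * (x j - mn j)) < \<bar>a (m+1)\<bar>"
      using assms(8) xX m by auto
    then have "(\<Sum>j=1..m. \<bar>a j\<bar> * (x j - mn j)) < \<bar>a i\<bar>" using m by simp
    then show ?thesis using s t bound by (simp add: algebra_simps)
  qed
qed

end
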